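(* Let $n\ge 4$ and $\omega=\frac12(-1+\sqrt3\,i)$. With relations ordered $\mathcal R_0,\dots,\mathcal R_6$ as in the context and a suitable ordering $E_0=\frac1{|\Phi|}J,E_1,\dots,E_6$ of the primitive idempotents, the character table of $\mathcal X(GU(n,2),\Phi(n,2))$ has rows $E_0$: $(1,1,1,2^{2n-3},2^{2n-3},2^{2n-3},2^{2n-3}-(-2)^{n-1}-4)$; $E_1$: $(1,\omega,\bar\omega,-(-2)^{n-1},-(-2)^{n-1}\bar\omega,-(-2)^{n-1}\omega,0)$; $E_2$: $(1,\bar\omega,\omega,-(-2)^{n-1},-(-2)^{n-1}\omega,-(-2)^{n-1}\bar\omega,0)$; $E_3$: $(1,1,1,-(-2)^{n-2},-(-2)^{n-2},-(-2)^{n-2},3(-2)^{n-2}-3)$; $E_4$: $(1,\omega,\bar\omega,-(-2)^{n-2},-(-2)^{n-2}\bar\omega,-(-2)^{n-2}\omega,0)$; $E_5$: $(1,\bar\omega,\omega,-(-2)^{n-2},-(-2)^{n-2}\omega,-(-2)^{n-2}\bar\omega,0)$; $E_6$: $(1,1,1,-(-2)^{n-3},-(-2)^{n-3},-(-2)^{n-3},3(-2)^{n-3}-3)$.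
   Context: Let $\Phi=\Phi(n,2)=\{x\in\mathbb{F}_4^n\setminus\{0\}:\langle x,x\rangle=0\}$ with $\langle x,y\rangle=\sum_k x_ky_k^{2}$, and let $\mathcal X(GU(n,2),\Phi(n,2))$ be the (commutative) association scheme of orbitals of $GU(n,2)$ acting on $\Phi$ by $x\mapsto xU$. Fix a primitive element $\alpha$ of $\mathbb{F}_4$. For $n\ge4$ the relations are $\mathcal R_l=\{(x,y)\in\Phi^2:y=\alpha^lx\}$ for $l=0,1,2$, $\mathcal R_l=\{(x,y)\in\Phi^2:\langle x,y\rangle=\alpha^{l}\}$ for $l=3,4,5$, and $\mathcal R_6=\{(x,y)\in\Phi^2:\langle x,y\rangle=0,\ y\notin\mathrm{Span}\{x\}\}$. The character table is $P=[p_j(i)]$ with $A_j=\sum_i p_j(i)E_i$, where $A_j$ is the adjacency matrix of $\mathcal R_j$ and $E_i$ are the primitive idempotents of the Bose–Mesner algebra. *)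

theory Defs
  imports Complex_Main
begin

text \<open>F4 = {0, 1, a, b} with a^2 = b = a + 1 (so a and b are the two primitive elements).\<close>

datatype f4 = F0 | F1 | FA | FB

fun f4_add :: "f4 \<Rightarrow> f4 \<Rightarrow> f4" where
  "f4_add F0 y = y"
| "f4_add x F0 = x"
| "f4_add F1 F1 = F0" | "f4_add F1 FA = FB" | "f4_add F1 FB = FA"
| "f4_add FA F1 = FB" | "f4_add FA FA = F0" | "f4_add FA FB = F1"
| "f4_add FB F1 = FA" | "f4_add FB FA = F1" | "f4_add FB FB = F0"

fun f4_mul :: "f4 \<Rightarrow> f4 \<Rightarrow> f4" where
  "f4_mul F0 y = F0"
| "f4_mul x F0 = F0"
| "f4_mul F1 y = y"
| "f4_mul x F1 = x"
| "f4_mul FA FA = FB" | "f4_mul FA FB = F1"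
| "f4_mul FB FA = F1" | "f4_mul FB FB = FA"

fun f4_pow :: "f4 \<Rightarrow> nat \<Rightarrow> f4" where
  "f4_pow x 0 = F1"
| "f4_pow x (Suc k) = f4_mul x (f4_pow x k)"

definition f4_primitive :: "f4 \<Rightarrow> bool" where
  "f4_primitive x \<longleftrightarrow> x \<noteq> F0 \<and> f4_pow x 1 \<noteq> F1 \<and> f4_pow x 2 \<noteq> F1"

definition f4vecs :: "nat \<Rightarrow> (nat \<Rightarrow> f4) set" where
  "f4vecs n = {x. \<forall>k\<ge>n. x k = F0}"

fun f4_sum :: "nat \<Rightarrow> (nat \<Rightarrow> f4) \<Rightarrow> f4" where
  "f4_sum 0 f = F0"
| "f4_sum (Suc k) f = f4_add (f4_sum k f) (f k)"

definition herm :: "nat \<Rightarrow> (nat \<Rightarrow> f4) \<Rightarrow> (nat \<Rightarrow> f4) \<Rightarrow> f4" where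
  "herm n x y = f4_sum n (\<lambda>k. f4_mul (x k) (f4_pow (y k) 2))"

definition zero_vec :: "nat \<Rightarrow> f4" where "zero_vec = (\<lambda>_. F0)"

definition smul :: "f4 \<Rightarrow> (nat \<Rightarrow> f4) \<Rightarrow> (nat \<Rightarrow> f4)" where
  "smul c x = (\<lambda>k. f4_mul c (x k))"

definition Phi :: "nat \<Rightarrow> (nat \<Rightarrow> f4) set" where
  "Phi n = {x \<in> f4vecs n. x \<noteq> zero_vec \<and> herm n x x = F0}"

definition span1 :: "(nat \<Rightarrow> f4) \<Rightarrow> (nat \<Rightarrow> f4) set" where
  "span1 x = {smul c x | c. True}"

definition rel :: "nat \<Rightarrow> f4 \<Rightarrow> nat \<Rightarrow> ((nat \<Rightarrow> f4) \<times> (nat \<Rightarrow> f4)) set" where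
  "rel n \<alpha> l =
     (if l \<le> 2 then {(x,y). x \<in> Phi n \<and> y \<in> Phi n \<and> y = smul (f4_pow \<alpha> l) x}
      else if l \<le> 5 then {(x,y). x \<in> Phi n \<and> y \<in> Phi n \<and> herm n x y = f4_pow \<alpha> l}
      else if l = 6 then {(x,y). x \<in> Phi n \<and> y \<in> Phi n \<and> herm n x y = F0 \<and> y \<notin> span1 x}
      else {})"

text \<open>Complex matrices indexed by Phi(n,2), represented as functions (only entries on Phi x Phi matter).\<close>
type_synonym mat = "(nat \<Rightarrow> f4) \<Rightarrow> (nat \<Rightarrow> f4) \<Rightarrow> complex"

definition adj :: "nat \<Rightarrow> f4 \<Rightarrow> nat \<Rightarrow> mat" where
  "adj n \<alpha> l x y = (if (x, y) \<in> rel n \<alpha> l then 1 else 0)"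

definition mmul :: "nat \<Rightarrow> mat \<Rightarrow> mat \<Rightarrow> mat" where
  "mmul n M N x y = (\<Sum>z\<in>Phi n. M x z * N z y)"

definition in_bose_mesner :: "nat \<Rightarrow> f4 \<Rightarrow> mat \<Rightarrow> bool" where
  "in_bose_mesner n \<alpha> M \<longleftrightarrow>
     (\<exists>c :: nat \<Rightarrow> complex. \<forall>x\<in>Phi n. \<forall>y\<in>Phi n. M x y = (\<Sum>j<7. c j * adj n \<alpha> j x y))"

text \<open>E_0..E_6 are the primitive idempotents of the Bose--Mesner algebra (which has
 dimension at most 7): seven nonzero, pairwise orthogonal idempotents in the algebra
 summing to the identity.\<close>
definition primitive_idempotents :: "nat \<Rightarrow> f4 \<Rightarrow> (nat \<Rightarrow> mat) \<Rightarrow> bool" where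
  "primitive_idempotents n \<alpha> E \<longleftrightarrow>
     (\<forall>i<7. in_bose_mesner n \<alpha> (E i)) \<and>
     (\<forall>i<7. \<exists>x\<in>Phi n. \<exists>y\<in>Phi n. E i x y \<noteq> 0) \<and>
     (\<forall>i<7. \<forall>j<7. \<forall>x\<in>Phi n. \<forall>y\<in>Phi n.
         mmul n (E i) (E j) x y = (if i = j then E i x y else 0)) \<and>
     (\<forall>x\<in>Phi n. \<forall>y\<in>Phi n. (\<Sum>i<7. E i x y) = (if x = y then 1 else 0))"

definition omega :: complex where
  "omega = (-1 + sqrt 3 * \<i>) / 2"

text \<open>char_table n i j = p_j(i): row E_i, column R_j.\<close>
definition char_table :: "nat \<Rightarrow> nat \<Rightarrow> nat \<Rightarrow> complex" where
  "char_table n i j =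
    (let w = omega; wb = cnj omega;
         a = (-2::complex) ^ (n - 1); b = (-2::complex) ^ (n - 2); c = (-2::complex) ^ (n - 3);
         t = (2::complex) ^ (2 * n - 3)
     in ([ [1, 1, 1, t, t, t, t - a - 4],
           [1, w, wb, - a, - a * wb, - a * w, 0],
           [1, wb, w, - a, - a * w, - a * wb, 0],
           [1, 1, 1, - b, - b, - b, 3 * b - 3],
           [1, w, wb, - b, - b * wb, - b * w, 0],
           [1, wb, w, - b, - b * w, - b * wb, 0],
           [1, 1, 1, - c, - c, - c, 3 * c - 3] ] ! i) ! j)"

end

theory Submission
  imports Defs
begin


lemma all_f4: "(\<forall>x::f4. P x) = (P F0 \<and> P F1 \<and> P FA \<and> P FB)"
  by (metis f4.exhaust)

fun inv4 :: "f4 \<Rightarrow> f4" where "inv4 F0 = F0" | "inv4 F1 = F1" | "inv4 FA = FB" | "inv4 FB = FA"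

instantiation f4 :: field
begin
definition "zero_f4 = F0"
definition "one_f4 = F1"
definition "plus_f4 = f4_add"
definition "times_f4 = f4_mul"
definition "uminus_f4 = (\<lambda>x::f4. x)"
definition "minus_f4 = f4_add"
definition "inverse_f4 = inv4"
definition "divide_f4 x y = f4_mul x (inv4 y)"
instance
  apply standard
  unfolding zero_f4_def one_f4_def plus_f4_def times_f4_def uminus_f4_def minus_f4_def inverse_f4_def divide_f4_def
  apply ((atomize (full))?, simp add: all_f4)+
  done
end

instance f4 :: finite
proof
  have "x \<in> {F0,F1,FA,FB}" for x by (cases x) auto
  then have "UNIV = {F0,F1,FA,FB}" by blast
  then show "finite (UNIV::f4 set)" by (metis finite.emptyI finite.insertI)
qed

lemmas f4_defs = zero_f4_def one_f4_def plus_f4_def times_f4_def uminus_f4_def minus_f4_def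
  inverse_f4_def divide_f4_def

lemma F0_is: "F0 = 0" and F1_is: "F1 = 1" by (simp_all add: f4_defs)
lemma f4_cases: "(x::f4) = 0 \<or> x = 1 \<or> x = FA \<or> x = FB"
  by (cases x) (auto simp: f4_defs)

lemma FA_FB: "FA * FA = FB" "FB * FB = FA" "FA * FB = 1" "FB * FA = 1" "FA + 1 = FB" "FB + 1 = FA"
  "1 + FA = FB" "1 + FB = FA" "FA + FB = 1" "FB + FA = 1" "FA \<noteq> 0" "FB \<noteq> 0" "FA \<noteq> 1" "FB \<noteq> 1"
  "FA \<noteq> FB" "FB \<noteq> FA" "0 \<noteq> FA" "0 \<noteq> FB" "1 \<noteq> FA" "1 \<noteq> FB"
  by (simp_all add: f4_defs)

lemma add_self[simp]: "(x::f4) + x = 0" by (cases x) (simp_all add: f4_defs)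
lemma neg_f4[simp]: "- (x::f4) = x" by (simp add: f4_defs)
lemma f4_add_eq[simp]: "f4_add x y = x + y" by (simp add: plus_f4_def)
lemma f4_mul_eq[simp]: "f4_mul x y = x * y" by (simp add: times_f4_def)
lemma f4_pow_eq[simp]: "f4_pow x k = x ^ k" by (induct k) (auto simp: F1_is)
lemma f4_sum_eq[simp]: "f4_sum n f = (\<Sum>k<n. f k)" by (induct n) (auto simp: F0_is add.commute)
lemma herm_eq: "herm n x y = (\<Sum>k<n. x k * (y k)^2)" by (simp add: herm_def)

lemma f4_pow4: "(x::f4)^4 = x"
  using f4_cases[of x] by (auto simp: power4_eq_xxxx FA_FB)
lemma f4_cube: "(x::f4) \<noteq> 0 \<Longrightarrow> x^3 = 1"
  using f4_cases[of x] by (auto simp: power3_eq_cube FA_FB)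
lemma two_f4[simp]: "(2::f4) = 0"
  by (metis add_self one_add_one)
lemma f4_frob: "((x::f4) + y)^2 = x^2 + y^2"
proof -
  have "(x+y)^2 = x^2+y^2 + (x*y + x*y)" by (simp add: power2_eq_square algebra_simps)
  then show ?thesis by simp
qed

fun psi :: "f4 \<Rightarrow> complex" where
  "psi F0 = 1" | "psi F1 = 1" | "psi FA = -1" | "psi FB = -1"

lemma psi_0[simp]: "psi 0 = 1" and psi_1[simp]: "psi 1 = 1" by (simp_all add: zero_f4_def one_f4_def)
lemma psi_add: "psi (a + b) = psi a * psi b"
  using f4_cases[of a] f4_cases[of b] by (auto simp: FA_FB)
lemma psi_sq: "psi (a^2) = psi a"
  using f4_cases[of a] by (auto simp: FA_FB power2_eq_square)
lemma psi_sum: "psi (sum f A) = (\<Prod>a\<in>A. psi (f a))"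
  by (induct A rule: infinite_finite_induct) (auto simp: psi_add)
lemma sum_UNIV_f4: "(\<Sum>c\<in>(UNIV::f4 set). f c) = f 0 + f 1 + f FA + f FB"
proof -
  have U: "UNIV = {0::f4, 1, FA, FB}" using f4_cases by auto
  show ?thesis unfolding U by (simp add: FA_FB add.assoc)
qed


lemma f4vecs_0: "f4vecs 0 = {zero_vec}"
  by (auto simp: f4vecs_def zero_vec_def)

lemma f4vecs_Suc: "f4vecs (Suc n) = (\<lambda>(z,c). z(n:=c)) ` (f4vecs n \<times> UNIV)"
proof
  show "(\<lambda>(z,c). z(n:=c)) ` (f4vecs n \<times> UNIV) \<subseteq> f4vecs (Suc n)"
    by (auto simp: f4vecs_def)
  show "f4vecs (Suc n) \<subseteq> (\<lambda>(z,c). z(n:=c)) ` (f4vecs n \<times> UNIV)"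
  proof
    fix x assume x: "x \<in> f4vecs (Suc n)"
    have "x = (\<lambda>(z,c). z(n:=c)) (x(n:=F0), x n)" by auto
    moreover have "x(n:=F0) \<in> f4vecs n" using x by (auto simp: f4vecs_def)
    ultimately show "x \<in> (\<lambda>(z,c). z(n:=c)) ` (f4vecs n \<times> UNIV)" by blast
  qed
qed

lemma inj_upd: "inj_on (\<lambda>(z,c). z(n:=c)) (f4vecs n \<times> UNIV)"
proof (rule inj_onI, clarsimp)
  fix z c z' c' assume z: "z \<in> f4vecs n" "z' \<in> f4vecs n" and eq: "z(n := c) = z'(n := c')"
  from eq have "c = c'" by (metis fun_upd_same)
  moreover have "z = z'"
  proof
    fix k show "z k = z' k"
    proof (cases "k = n")
      case True then show ?thesis using z by (simp add: f4vecs_def)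
    next
      case False then show ?thesis using eq by (metis fun_upd_other)
    qed
  qed
  ultimately show "z = z' \<and> c = c'" by simp
qed

lemma finite_f4vecs: "finite (f4vecs n)"
  by (induct n) (auto simp: f4vecs_0 f4vecs_Suc)

lemma sum_prod_vecs:
  fixes g :: "nat \<Rightarrow> f4 \<Rightarrow> complex"
  shows "(\<Sum>z\<in>f4vecs n. \<Prod>k<n. g k (z k)) = (\<Prod>k<n. \<Sum>c\<in>UNIV. g k c)"
proof (induct n)
  case 0 show ?case by (simp add: f4vecs_0)
next
  case (Suc n)
  have "(\<Sum>z\<in>f4vecs (Suc n). \<Prod>k<Suc n. g k (z k))
      = (\<Sum>p\<in>f4vecs n \<times> UNIV. \<Prod>k<Suc n. g k (((\<lambda>(z,c). z(n:=c)) p) k))"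
    unfolding f4vecs_Suc by (subst sum.reindex[OF inj_upd]) (simp add: o_def)
  also have "... = (\<Sum>(z,c)\<in>f4vecs n \<times> UNIV. (\<Prod>k<n. g k (z k)) * g n c)"
    by (rule sum.cong) (auto simp: prod.lessThan_Suc intro!: prod.cong)
  also have "... = (\<Sum>z\<in>f4vecs n. \<Prod>k<n. g k (z k)) * (\<Sum>c\<in>UNIV. g n c)"
    by (simp add: sum.cartesian_product[symmetric] sum_product)
  also have "... = (\<Prod>k<Suc n. \<Sum>c\<in>UNIV. g k c)" using Suc by (simp add: prod.lessThan_Suc)
  finally show ?case .
qed

lemma vec_zero_iff: "w \<in> f4vecs n \<Longrightarrow> (w = zero_vec) = (\<forall>k<n. w k = 0)"
  by (auto simp: f4vecs_def zero_vec_def F0_is fun_eq_iff) (metis not_le)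

lemma prod_if4: "(\<Prod>k<n. if w k = (0::f4) then (4::complex) else 0) = (if \<forall>k<n. w k = 0 then 4^n else 0)"
  by (induct n) (auto simp: less_Suc_eq)

lemma charsum1: "(\<Sum>c\<in>UNIV. psi (c * d^2)) = (if d = 0 then 4 else 0)"
  using f4_cases[of d] by (auto simp: sum_UNIV_f4 FA_FB power2_eq_square)

lemma charsum2: "(\<Sum>c\<in>UNIV. psi (FA * (c * c^2)) * psi (c * d^2)) = -2 * psi (FA * (d * d^2))"
  using f4_cases[of d] by (auto simp: sum_UNIV_f4 FA_FB power2_eq_square)

lemma S1: assumes "w \<in> f4vecs n"
  shows "(\<Sum>z\<in>f4vecs n. psi (herm n z w)) = (if w = zero_vec then 4^n else 0)"
proof -
  have "(\<Sum>z\<in>f4vecs n. psi (herm n z w)) = (\<Sum>z\<in>f4vecs n. \<Prod>k<n. (\<lambda>k c. psi (c * (w k)^2)) k (z k))"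
    by (simp add: herm_eq psi_sum)
  also have "... = (\<Prod>k<n. \<Sum>c\<in>UNIV. psi (c * (w k)^2))" by (rule sum_prod_vecs)
  also have "... = (\<Prod>k<n. if w k = 0 then 4 else 0)"
    by (simp add: charsum1)
  also have "... = (if w = zero_vec then 4^n else 0)"
    by (simp add: prod_if4 vec_zero_iff[OF assms])
  finally show ?thesis .
qed

lemma S2: "(\<Sum>z\<in>f4vecs n. psi (FA * herm n z z) * psi (herm n z w)) = (-2)^n * psi (FA * herm n w w)"
proof -
  have "(\<Sum>z\<in>f4vecs n. psi (FA * herm n z z) * psi (herm n z w))
     = (\<Sum>z\<in>f4vecs n. \<Prod>k<n. (\<lambda>k c. psi (FA * (c * c^2)) * psi (c * (w k)^2)) k (z k))"
    by (simp add: herm_eq psi_sum sum_distrib_left prod.distrib power2_eq_square)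
  also have "... = (\<Prod>k<n. \<Sum>c\<in>UNIV. psi (FA * (c * c^2)) * psi (c * (w k)^2))" by (rule sum_prod_vecs)
  also have "... = (\<Prod>k<n. -2 * psi (FA * (w k * (w k)^2)))"
    by (simp add: charsum2)
  also have "... = (\<Prod>k<n. (-2::complex)) * (\<Prod>k<n. psi (FA * (w k * (w k)^2)))"
    by (rule prod.distrib)
  also have "... = (-2)^n * psi (FA * herm n w w)"
    by (simp add: herm_eq psi_sum sum_distrib_left)
  finally show ?thesis .
qed

lemma cube01: "(c::f4) * c^2 = 0 \<or> c * c^2 = 1"
  using f4_cases[of c] by (auto simp: FA_FB power2_eq_square)

lemma herm_self01: "herm n z z = 0 \<or> herm n z z = 1"
proof (induct n)
  case 0 show ?case by (simp add: herm_eq)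
next
  case (Suc n)
  have "herm (Suc n) z z = herm n z z + z n * (z n)^2" by (simp add: herm_eq)
  then show ?case using Suc cube01[of "z n"] by auto
qed

lemma zero_vec_in: "zero_vec \<in> f4vecs n" by (simp add: f4vecs_def zero_vec_def)
lemma herm_zero1[simp]: "herm n zero_vec w = 0" by (simp add: herm_eq zero_vec_def F0_is)
lemma herm_zero2[simp]: "herm n w zero_vec = 0" by (simp add: herm_eq zero_vec_def F0_is)

lemma Phi_sub: "Phi n \<subseteq> f4vecs n" by (auto simp: Phi_def)
lemma finite_Phi: "finite (Phi n)" using finite_subset[OF Phi_sub finite_f4vecs] .

lemma Phi_sum:
  fixes f :: "(nat \<Rightarrow> f4) \<Rightarrow> complex"
  shows "(\<Sum>z\<in>Phi n. f z) = (\<Sum>z\<in>f4vecs n. (1 + psi (FA * herm n z z)) / 2 * f z) - f zero_vec"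
proof -
  have ind: "(1 + psi (FA * herm n z z)) / 2 * f z = (if herm n z z = 0 then f z else 0)" for z
    using herm_self01[of n z] by auto
  have "(\<Sum>z\<in>f4vecs n. (1 + psi (FA * herm n z z)) / 2 * f z) = (\<Sum>z\<in>{z\<in>f4vecs n. herm n z z = 0}. f z)"
    apply (simp only: ind)
    by (simp add: sum.inter_filter[OF finite_f4vecs])
  also have "{z\<in>f4vecs n. herm n z z = 0} = insert zero_vec (Phi n)"
    using zero_vec_in by (auto simp: Phi_def F0_is)
  also have "(\<Sum>z\<in>insert zero_vec (Phi n). f z) = f zero_vec + (\<Sum>z\<in>Phi n. f z)"
    by (rule sum.insert[OF finite_Phi]) (simp add: Phi_def)
  finally show ?thesis by simp
qed

lemma Msum: assumes "w \<in> f4vecs n"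
  shows "(\<Sum>z\<in>Phi n. psi (herm n z w)) = (if w = zero_vec then 4^n else 0) / 2 + (-2)^n / 2 * psi (FA * herm n w w) - 1"
proof -
  have e: "(1 + psi (FA * herm n z z)) / 2 * psi (herm n z w) = psi (herm n z w)/2 + psi (FA * herm n z z) * psi (herm n z w) / 2" for z
    by (simp add: field_simps)
  have "(\<Sum>z\<in>f4vecs n. (1 + psi (FA * herm n z z)) / 2 * psi (herm n z w))
     = (\<Sum>z\<in>f4vecs n. psi (herm n z w)/2 + psi (FA * herm n z z) * psi (herm n z w) / 2)"
    by (simp only: e)
  also have "... = (\<Sum>z\<in>f4vecs n. psi (herm n z w)) / 2 + (\<Sum>z\<in>f4vecs n. psi (FA * herm n z z) * psi (herm n z w)) / 2"
    by (simp only: sum.distrib sum_divide_distrib)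
  also have "... = (if w = zero_vec then 4^n else 0) / 2 + (-2)^n * psi (FA * herm n w w) / 2"
    by (simp only: S1[OF assms] S2)
  finally show ?thesis using Phi_sum[of "\<lambda>z. psi (herm n z w)" n] by simp
qed


lemma smul_app[simp]: "smul c x k = c * x k" by (simp add: smul_def)

lemma frob_sum: "((\<Sum>k<(n::nat). f k)::f4)^2 = (\<Sum>k<n. (f k)^2)"
  by (induct n) (simp_all add: f4_frob)

lemma herm_smul2: "herm n x (smul c y) = c^2 * herm n x y"
  by (simp add: herm_eq sum_distrib_left power_mult_distrib algebra_simps)
lemma herm_smul1: "herm n (smul c x) y = c * herm n x y"
  by (simp add: herm_eq sum_distrib_left algebra_simps)
lemma herm_conj: "herm n x y = (herm n y x)^2"
proof -
  have "(herm n y x)^2 = (\<Sum>k<n. (y k * (x k)^2)^2)" by (simp add: herm_eq frob_sum)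
  also have "... = (\<Sum>k<n. x k * (y k)^2)"
    by (rule sum.cong) (simp_all add: power_mult_distrib f4_pow4 flip: power_mult mult.commute)
  finally show ?thesis by (simp add: herm_eq)
qed
lemma herm_add2: "herm n z (\<lambda>k. u k + v k) = herm n z u + herm n z v"
  by (simp add: herm_eq f4_frob distrib_left sum.distrib)
lemma herm_add1: "herm n (\<lambda>k. u k + v k) z = herm n u z + herm n v z"
  by (simp add: herm_eq distrib_right sum.distrib)

lemma psi_conj: "psi (l * t^2) = psi (l^2 * t)"
  using f4_cases[of l] f4_cases[of t] by (auto simp: FA_FB power2_eq_square)
lemma psi_tr: "psi (FA * (t + t^2)) = psi t"
  using f4_cases[of t] by (auto simp: FA_FB power2_eq_square)

definition Tm :: "nat \<Rightarrow> f4 \<Rightarrow> mat" where "Tm n l x y = psi (l * herm n x y)"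
definition Sm :: "f4 \<Rightarrow> mat" where "Sm c x y = (if y = smul c x then 1 else 0)"

lemma Phi_iff: "x \<in> Phi n \<longleftrightarrow> x \<in> f4vecs n \<and> x \<noteq> zero_vec \<and> herm n x x = 0"
  by (simp add: Phi_def F0_is)

lemma P1:
  assumes x: "x \<in> Phi n" and y: "y \<in> Phi n"
  shows "mmul n (Tm n l) (Tm n m) x y =
    (if (\<lambda>k. l * x k + m^2 * y k) = zero_vec then 4^n else 0) / 2 + (-2)^n / 2 * psi (l * m * herm n x y) - 1"
proof -
  define w where "w = (\<lambda>k. l * x k + m^2 * y k)"
  have wv: "w \<in> f4vecs n" using x y by (auto simp: Phi_def f4vecs_def w_def F0_is)
  have "psi (l * herm n x z) * psi (m * herm n z y) = psi (herm n z w)" for z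
  proof -
    have 1: "psi (l * herm n x z) = psi (herm n z (smul l x))"
      by (subst herm_conj) (simp add: psi_conj herm_smul2)
    have 2: "psi (m * herm n z y) = psi (herm n z (smul (m^2) y))"
      by (simp add: herm_smul2 f4_pow4 flip: power_mult)
    have 3: "herm n z w = herm n z (smul l x) + herm n z (smul (m^2) y)"
      unfolding w_def by (subst herm_add2[symmetric]) simp
    show ?thesis by (simp add: 1 2 3 psi_add)
  qed
  then have "mmul n (Tm n l) (Tm n m) x y = (\<Sum>z\<in>Phi n. psi (herm n z w))"
    by (simp add: mmul_def Tm_def)
  also have "... = (if w = zero_vec then 4^n else 0) / 2 + (-2)^n / 2 * psi (FA * herm n w w) - 1"
    by (rule Msum[OF wv])
  also have "psi (FA * herm n w w) = psi (l * m * herm n x y)"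
  proof -
    have hx: "herm n x x = 0" and hy: "herm n y y = 0" using x y by (auto simp: Phi_iff)
    have "herm n w w = herm n (smul l x) (smul l x) + herm n (smul l x) (smul (m^2) y)
        + (herm n (smul (m^2) y) (smul l x) + herm n (smul (m^2) y) (smul (m^2) y))"
      unfolding w_def by (simp add: herm_add1 herm_add2 flip: smul_app)
    also have "... = l * m * herm n x y + (l * m * herm n x y)^2"
    proof -
      define h where "h = herm n y x"
      have hxy: "herm n x y = h^2" by (simp add: h_def herm_conj[of n x y])
      have hyx: "herm n y x = h" by (simp add: h_def)
      have e1: "((m::f4)^2)^2 = m" by (simp add: f4_pow4 flip: power_mult)
      have e2: "(l*m*h^2)^2 = l^2*m^2*(h::f4)" by (simp add: power_mult_distrib f4_pow4 flip: power_mult)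
      show ?thesis by (simp add: herm_smul1 herm_smul2 hx hy hxy hyx e1 e2 algebra_simps f4_pow4)
    qed
    finally show ?thesis by (simp add: psi_tr)
  qed
  finally show ?thesis by (simp add: w_def)
qed


definition unitv :: "nat \<Rightarrow> nat \<Rightarrow> complex" where "unitv i s = (if s = i then 1 else 0)"

definition NN :: "complex \<Rightarrow> complex" where "NN q = (q*q+q)/2 - 1"

definition tab :: "complex \<Rightarrow> nat \<Rightarrow> nat \<Rightarrow> nat \<Rightarrow> complex" where
  "tab q j k =
    (if j < 3 \<and> k < 3 then unitv ((j+k) mod 3)
     else if j < 3 then (if k = 3 then unitv 3 else unitv (4 + (j + (k-4)) mod 3))
     else if k < 3 then (if j = 3 then unitv 3 else unitv (4 + ((j-4) + k) mod 3))
     else if j = 3 \<and> k = 3 then (\<lambda>s. NN q * unitv 3 s)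
     else if j = 3 \<or> k = 3 then (\<lambda>s. (q/2 - 1) * unitv 3 s)
     else (\<lambda>s. q*q/2 * unitv ((j+k-8) mod 3) s + q/2 * unitv (4 + (j+k-8) mod 3) s - unitv 3 s))"

definition bmulv :: "complex \<Rightarrow> nat \<Rightarrow> (nat \<Rightarrow> complex) \<Rightarrow> nat \<Rightarrow> complex" where
  "bmulv q j d s = (\<Sum>l<7. d l * tab q j l s)"

definition cmul :: "complex \<Rightarrow> (nat \<Rightarrow> complex) \<Rightarrow> (nat \<Rightarrow> complex) \<Rightarrow> nat \<Rightarrow> complex" where
  "cmul q c d s = (\<Sum>j<7. c j * bmulv q j d s)"

definition ea :: "complex \<Rightarrow> nat \<Rightarrow> nat \<Rightarrow> complex" where
  "ea q k s = [
     [0,0,0,1/NN q,0,0,0],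
     [1/9, -1/9, 0, 0, 2/(9*q), -2/(9*q), 0],
     [1/9, 0, -1/9, 0, 2/(9*q), 0, -2/(9*q)],
     [1/9, 1/9, 1/9, -(2*q-2)/(3*q*NN q), 2/(9*q), 2/(9*q), 2/(9*q)],
     [2/9, -2/9, 0, 0, -2/(9*q), 2/(9*q), 0],
     [2/9, 0, -2/9, 0, -2/(9*q), 0, 2/(9*q)],
     [2/9, 2/9, 2/9, -(q+2)/(3*q*NN q), -2/(9*q), -2/(9*q), -2/(9*q)] ] ! k ! s"

definition eb :: "complex \<Rightarrow> nat \<Rightarrow> nat \<Rightarrow> complex" where
  "eb q k s = [
     [0,0,0,0,0,0,0],
     [0, -1/9, 1/9, 0, 0, -2/(9*q), 2/(9*q)],
     [0, 1/9, -1/9, 0, 0, 2/(9*q), -2/(9*q)],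
     [0,0,0,0,0,0,0],
     [0, -2/9, 2/9, 0, 0, 2/(9*q), -2/(9*q)],
     [0, 2/9, -2/9, 0, 0, -2/(9*q), 2/(9*q)],
     [0,0,0,0,0,0,0] ] ! k ! s"

definition ca :: "complex \<Rightarrow> nat \<Rightarrow> nat \<Rightarrow> complex" where
  "ca q k j = [
     [1,1,1,NN q,q/2-1,q/2-1,q/2-1],
     [1,0,-1,0,q,0,-q],
     [1,-1,0,0,q,-q,0],
     [1,1,1,0,q,q,q],
     [1,0,-1,0,-q/2,0,q/2],
     [1,-1,0,0,-q/2,q/2,0],
     [1,1,1,0,-q/2,-q/2,-q/2] ] ! k ! j"

definition cb :: "complex \<Rightarrow> nat \<Rightarrow> nat \<Rightarrow> complex" where
  "cb q k j = [
     [0,0,0,0,0,0,0],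
     [0,1,-1,0,0,q,-q],
     [0,-1,1,0,0,-q,q],
     [0,0,0,0,0,0,0],
     [0,1,-1,0,0,-q/2,q/2],
     [0,-1,1,0,0,q/2,-q/2],
     [0,0,0,0,0,0,0] ] ! k ! j"

definition evec where "evec q w k s = ea q k s + eb q k s * w"
definition chi where "chi q w k j = ca q k j + cb q k j * w"

lemma sum7: "(\<Sum>l<7. f l) = f 0 + f 1 + f 2 + f 3 + f 4 + f 5 + f (6::nat)"
  by (simp del: lessThan_Suc add: numeral_eq_Suc sum.lessThan_Suc)

lemma allSuc: "(\<forall>j<Suc n. P j) = ((\<forall>j<n. P j) \<and> P n)" by (auto simp: less_Suc_eq)
lemma all7: "(\<forall>j<7. P j) = (P 0 \<and> P 1 \<and> P 2 \<and> P 3 \<and> P 4 \<and> P 5 \<and> P (6::nat))"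
  by (simp add: numeral_eq_Suc allSuc conj_ac)

lemma pairmul: assumes h: "(w::complex)^2 = -1 - w"
  shows "(a + b*w)*(c+d*w) = (a*c - b*d) + (a*d + b*c - b*d)*w"
proof -
  have "(a + b*w)*(c+d*w) = a*c + (a*d+b*c)*w + b*d*w^2" by (simp add: algebra_simps power2_eq_square)
  also have "... = a*c + (a*d+b*c)*w + b*d*(-1-w)" by (simp only: h)
  finally show ?thesis by (simp add: algebra_simps)
qed

lemma sumsplit: "(\<Sum>l<(7::nat). (a l + b l * (w::complex)) * t l) = (\<Sum>l<7. a l * t l) + (\<Sum>l<7. b l * t l) * w"
proof -
  have "(\<Sum>l<(7::nat). a l * t l) + (\<Sum>l<7. b l * t l) * w = (\<Sum>l<7. a l * t l + b l * t l * w)"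
    by (simp only: sum.distrib sum_distrib_right)
  also have "... = (\<Sum>l<7. (a l + b l * w) * t l)" by (rule sum.cong) (simp_all add: algebra_simps)
  finally show ?thesis by (rule sym)
qed

lemma eigA:
  assumes q: "q \<noteq> 0" and N: "NN q \<noteq> 0"
  shows "\<forall>j<7. \<forall>k<7. \<forall>s<7. (\<Sum>l<7. ea q k l * tab q j l s) = ca q k j * ea q k s - cb q k j * eb q k s"
  apply (simp only: all7)
  apply (intro conjI)
  apply (simp_all add: sum7 tab_def ea_def eb_def ca_def cb_def unitv_def)
  apply ((simp_all add: field_simps q N)?)
  apply ((simp_all only: NN_def)?)
  apply (algebra+)?
  done


lemma eigB:
  assumes q: "q \<noteq> 0" and N: "NN q \<noteq> 0"
  shows "\<forall>j<7. \<forall>k<7. \<forall>s<7. (\<Sum>l<7. eb q k l * tab q j l s) = ca q k j * eb q k s + cb q k j * ea q k s - cb q k j * eb q k s"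
  apply (simp only: all7)
  apply (intro conjI)
  apply (simp_all add: sum7 tab_def ea_def eb_def ca_def cb_def unitv_def)
  apply ((simp_all add: field_simps q N)?)
  apply ((simp_all only: NN_def)?)
  apply (algebra+)?
  done

lemma orthA:
  assumes q: "q \<noteq> 0" and N: "NN q \<noteq> 0"
  shows "\<forall>i<7. \<forall>k<7. (\<Sum>j<7. ea q i j * ca q k j - eb q i j * cb q k j) = (if i = k then 1 else 0)"
  apply (simp only: all7)
  apply (intro conjI)
  apply (simp_all add: sum7 ea_def eb_def ca_def cb_def)
  apply ((simp_all add: field_simps q N)?)
  apply ((simp_all only: NN_def)?)
  apply (algebra+)?
  done

lemma orthB:
  assumes q: "q \<noteq> 0" and N: "NN q \<noteq> 0"
  shows "\<forall>i<7. \<forall>k<7. (\<Sum>j<7. ea q i j * cb q k j + eb q i j * ca q k j - eb q i j * cb q k j) = 0"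
  apply (simp only: all7)
  apply (intro conjI)
  apply (simp_all add: sum7 ea_def eb_def ca_def cb_def)
  apply ((simp_all add: field_simps q N)?)
  apply ((simp_all only: NN_def)?)
  apply (algebra+)?
  done

lemma sumEA: assumes q: "q \<noteq> 0" and N: "NN q \<noteq> 0" shows "\<forall>s<7. (\<Sum>i<7. ea q i s) = unitv 0 s"
  apply (simp only: all7)
  apply (simp add: sum7 ea_def unitv_def)
  apply (simp add: field_simps q N)
  done
lemma sumEB: "\<forall>s<7. (\<Sum>i<7. eb q i s) = 0"
  apply (simp only: all7)
  apply (simp add: sum7 eb_def)
  done

lemma bmulv_evec:
  assumes w: "w^2 = -1 - w" and q: "q \<noteq> 0" and N: "NN q \<noteq> 0" and j: "j<7" and k: "k<7" and s: "s<7"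
  shows "bmulv q j (evec q w k) s = chi q w k j * evec q w k s"
proof -
  have "bmulv q j (evec q w k) s = (\<Sum>l<7. ea q k l * tab q j l s) + (\<Sum>l<7. eb q k l * tab q j l s) * w"
    unfolding bmulv_def evec_def by (rule sumsplit)
  also have "... = (ca q k j * ea q k s - cb q k j * eb q k s) + (ca q k j * eb q k s + cb q k j * ea q k s - cb q k j * eb q k s) * w"
    using eigA[OF q N] eigB[OF q N] j k s by simp
  also have "... = chi q w k j * evec q w k s"
    unfolding chi_def evec_def by (rule pairmul[OF w, symmetric])
  finally show ?thesis .
qed

lemma orth_evec:
  assumes w: "w^2 = -1 - w" and q: "q \<noteq> 0" and N: "NN q \<noteq> 0" and i: "i<7" and k: "k<7"
  shows "(\<Sum>j<7. evec q w i j * chi q w k j) = (if i = k then 1 else 0)"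
proof -
  have "(\<Sum>j<7. evec q w i j * chi q w k j) = (\<Sum>j<7. (ea q i j * ca q k j - eb q i j * cb q k j)
      + (ea q i j * cb q k j + eb q i j * ca q k j - eb q i j * cb q k j) * w)"
    by (simp only: evec_def chi_def pairmul[OF w])
  also have "... = (\<Sum>j<7. ea q i j * ca q k j - eb q i j * cb q k j)
      + (\<Sum>j<7. ea q i j * cb q k j + eb q i j * ca q k j - eb q i j * cb q k j) * w"
    by (simp only: sum.distrib sum_distrib_right)
  also have "... = (if i = k then 1 else 0)"
    using orthA[OF q N] orthB[OF q N] i k by simp
  finally show ?thesis .
qed

lemma cmul_evec:
  assumes w: "w^2 = -1 - w" and q: "q \<noteq> 0" and N: "NN q \<noteq> 0" and i: "i<7" and k: "k<7" and s: "s<7"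
  shows "cmul q (evec q w i) (evec q w k) s = (if i = k then evec q w i s else 0)"
proof -
  have "cmul q (evec q w i) (evec q w k) s = (\<Sum>j<7. evec q w i j * (chi q w k j * evec q w k s))"
    unfolding cmul_def by (rule sum.cong) (simp_all add: bmulv_evec[OF w q N _ k s])
  also have "... = (\<Sum>j<7. evec q w i j * chi q w k j) * evec q w k s"
    by (simp add: sum_distrib_right mult.assoc)
  also have "... = (if i = k then evec q w i s else 0)"
    by (simp add: orth_evec[OF w q N i k])
  finally show ?thesis .
qed

lemma sum_evec:
  assumes q: "q \<noteq> 0" and N: "NN q \<noteq> 0" and s: "s<7"
  shows "(\<Sum>i<7. evec q w i s) = unitv 0 s"
  using sumEA[OF q N] sumEB s by (simp add: evec_def sum.distrib sum_distrib_right[symmetric])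

definition bvt :: "nat \<Rightarrow> nat \<Rightarrow> complex" where
  "bvt t j = [[1,0,0,1,1,1,1],[0,1,0,1,1,1,1],[0,0,1,1,1,1,1],[0,0,0,1,1,-1,-1],
              [0,0,0,1,-1,-1,1],[0,0,0,1,-1,1,-1],[0,0,0,1,1,1,1]] ! t ! j"

definition pa :: "complex \<Rightarrow> nat \<Rightarrow> nat \<Rightarrow> complex" where
  "pa q i j = [
    [1,1,1,q*q/8,q*q/8,q*q/8,q*q/8 + q/2 - 4],
    [1,0,-1,q/2,-q/2,0,0],
    [1,-1,0,q/2,0,-q/2,0],
    [1,1,1,-q/4,-q/4,-q/4,3*q/4 - 3],
    [1,0,-1,-q/4,q/4,0,0],
    [1,-1,0,-q/4,0,q/4,0],
    [1,1,1,q/8,q/8,q/8,-3*q/8 - 3] ] ! i ! j"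

definition pb :: "complex \<Rightarrow> nat \<Rightarrow> nat \<Rightarrow> complex" where
  "pb q i j = [
    [0,0,0,0,0,0,0],
    [0,1,-1,0,-q/2,q/2,0],
    [0,-1,1,0,q/2,-q/2,0],
    [0,0,0,0,0,0,0],
    [0,1,-1,0,q/4,-q/4,0],
    [0,-1,1,0,-q/4,q/4,0],
    [0,0,0,0,0,0,0] ] ! i ! j"

definition valA where "valA q i t = (\<Sum>s<7. ea q i s * bvt t s)"
definition valB where "valB q i t = (\<Sum>s<7. eb q i s * bvt t s)"

lemma tableA:
  assumes q: "q \<noteq> 0" and N: "NN q \<noteq> 0"
  shows "\<forall>j<7. \<forall>t<7. (\<Sum>i<7. pa q i j * valA q i t - pb q i j * valB q i t) = (if j = t then 1 else 0)"
  apply (simp only: all7)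
  apply (intro conjI)
  apply (simp_all add: sum7 pa_def pb_def valA_def valB_def ea_def eb_def bvt_def)
  apply ((simp_all add: field_simps q N)?)
  apply ((simp_all only: NN_def)?)
  apply (algebra+)?
  done

lemma tableB:
  assumes q: "q \<noteq> 0" and N: "NN q \<noteq> 0"
  shows "\<forall>j<7. \<forall>t<7. (\<Sum>i<7. pa q i j * valB q i t + pb q i j * valA q i t - pb q i j * valB q i t) = 0"
  apply (simp only: all7)
  apply (intro conjI)
  apply (simp_all add: sum7 pa_def pb_def valA_def valB_def ea_def eb_def bvt_def)
  apply ((simp_all add: field_simps q N)?)
  apply ((simp_all only: NN_def)?)
  apply (algebra+)?
  done

lemma val0:
  assumes q: "q \<noteq> 0" and N: "NN q \<noteq> 0"
  shows "\<forall>i<7. valB q i 0 = 0 \<and> valA q i 0 = [1/NN q, 1/9, 1/9, (q+8)*(q-1)/(18*NN q), 2/9, 2/9, (q-4)*(q+2)/(9*NN q)] ! i"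
  apply (simp only: all7)
  apply (simp add: sum7 valA_def valB_def ea_def eb_def bvt_def)
  apply ((simp add: field_simps q N)?)
  apply ((simp only: NN_def)?)
  apply (algebra+)?
  done

lemma valA3: "valA q i t = (\<Sum>s<7. ea q i s * bvt t s)" by (simp add: valA_def)


lemma prim_cases: assumes "f4_primitive \<alpha>" shows "\<alpha> = FA \<or> \<alpha> = FB"
  using assms f4_cases[of \<alpha>] unfolding f4_primitive_def by (auto simp: F0_is F1_is FA_FB)

lemma alpha_facts: assumes "\<alpha> = FA \<or> \<alpha> = FB"
  shows "\<alpha> \<noteq> 0" "\<alpha>^2 \<noteq> 0" "\<alpha> \<noteq> 1" "\<alpha>^2 \<noteq> 1" "\<alpha>^2 \<noteq> \<alpha>" "\<alpha> \<noteq> \<alpha>^2"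
    "1 \<noteq> \<alpha>" "1 \<noteq> \<alpha>^2" "\<alpha> * \<alpha> = \<alpha>^2" "\<alpha> * \<alpha>^2 = 1" "\<alpha>^2 * \<alpha> = 1" "\<alpha>^2 * \<alpha>^2 = \<alpha>"
    "\<alpha>^3 = 1" "\<alpha>^4 = \<alpha>" "\<alpha>^5 = \<alpha>^2" "psi \<alpha> = -1" "psi (\<alpha>^2) = -1" "(\<alpha>^2)^2 = \<alpha>"
  using assms by (auto simp: FA_FB eval_nat_numeral)

lemma f4_alpha: assumes "\<alpha> = FA \<or> \<alpha> = FB" shows "c = 0 \<or> c = 1 \<or> c = \<alpha> \<or> c = \<alpha>^2"
  using assms f4_cases[of c] by (auto simp: FA_FB eval_nat_numeral)

lemma smul_smul[simp]: "smul a (smul b x) = smul (a*b) x"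
  by (simp add: fun_eq_iff mult.assoc smul_def)
lemma smul_one[simp]: "smul 1 x = x"
  by (simp add: fun_eq_iff smul_def)

lemma Phi_nz: assumes "x \<in> Phi n" obtains k where "x k \<noteq> 0"
  using assms by (auto simp: Phi_iff zero_vec_def fun_eq_iff F0_is)

lemma smul_inj: assumes "x \<in> Phi n" "smul a x = smul b x" shows "a = b"
proof -
  obtain k where k: "x k \<noteq> 0" using Phi_nz[OF assms(1)] .
  from assms(2) have "a * x k = b * x k" by (metis smul_app)
  then show ?thesis using k by simp
qed

lemma smul_eq_iff: "x \<in> Phi n \<Longrightarrow> (smul a x = smul b x) = (a = b)"
  using smul_inj by blast
lemma smul_eq_self: "x \<in> Phi n \<Longrightarrow> (x = smul a x) = (a = 1)" "x \<in> Phi n \<Longrightarrow> (smul a x = x) = (a = 1)"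
  using smul_eq_iff[of x n a 1] by auto

lemma smul_Phi: assumes "a \<noteq> 0" "x \<in> Phi n" shows "smul a x \<in> Phi n"
proof -
  obtain k where k: "x k \<noteq> 0" using Phi_nz[OF assms(2)] .
  have nz: "smul a x k \<noteq> 0" using k assms(1) by simp
  have "smul a x \<noteq> zero_vec"
  proof
    assume "smul a x = zero_vec"
    then have "smul a x k = 0" by (simp add: zero_vec_def F0_is)
    then show False using nz by simp
  qed
  moreover have "smul a x \<in> f4vecs n" using assms(2) by (auto simp: Phi_def f4vecs_def F0_is)
  moreover have "herm n (smul a x) (smul a x) = 0" using assms(2) by (simp add: herm_smul1 herm_smul2 Phi_iff)
  ultimately show ?thesis by (simp add: Phi_iff)
qed

lemma sum_delta1:
  assumes "finite A"
  shows "(\<Sum>z\<in>A. (if z = a then 1 else 0) * f z) = (if a \<in> A then f a else (0::complex))"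
proof -
  have "(\<Sum>z\<in>A. (if z = a then 1 else 0) * f z) = (\<Sum>z\<in>A. if z = a then f z else 0)"
    by (rule sum.cong) auto
  then show ?thesis using assms by (simp add: sum.delta)
qed

lemma mm_S_left: assumes "a \<noteq> 0" "x \<in> Phi n" shows "mmul n (Sm a) M x y = M (smul a x) y"
  unfolding mmul_def Sm_def using sum_delta1[OF finite_Phi[of n], where a="smul a x" and f="\<lambda>z. M z y"] smul_Phi[OF assms]
  by simp

lemma mm_S_right: assumes "a \<noteq> 0" "y \<in> Phi n" shows "mmul n M (Sm a) x y = M x (smul (a^2) y)"
proof -
  have a3: "a^2 * a = 1" using f4_cube[OF assms(1)] by (simp add: power3_eq_cube power2_eq_square)
  have a3': "a * a^2 = 1" using a3 by (simp add: mult.commute)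
  have iff: "(y = smul a z) = (z = smul (a^2) y)" for z
    using a3 a3' by auto
  have "mmul n M (Sm a) x y = (\<Sum>z\<in>Phi n. (if z = smul (a^2) y then 1 else 0) * M x z)"
    unfolding mmul_def Sm_def by (rule sum.cong) (simp_all add: iff mult.commute)
  also have "... = M x (smul (a^2) y)"
    using sum_delta1[OF finite_Phi[of n], where a="smul (a^2) y" and f="\<lambda>z. M x z"] smul_Phi[OF _ assms(2), of "a^2"] assms(1)
    by simp
  finally show ?thesis .
qed

lemma Tm_left: "Tm n l (smul a x) y = Tm n (l*a) x y"
  by (simp add: Tm_def herm_smul1 mult.assoc)
lemma Tm_right: "Tm n l x (smul (a^2) y) = Tm n (l*a) x y"
  by (simp add: Tm_def herm_smul2 f4_pow4 mult.assoc flip: power_mult)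
lemma Sm_left: "Sm b (smul a x) y = Sm (a*b) x y"
  by (simp add: Sm_def mult.commute)
lemma Tm_right2: "Tm n l x (smul c y) = Tm n (l * c^2) x y"
  by (simp add: Tm_def herm_smul2 mult.assoc)
lemma Sm_right2: assumes "c \<noteq> 0" shows "Sm b x (smul c y) = Sm (b*c^2) x y"
proof -
  have c3: "c^2 * c = 1" "c * c^2 = 1" using f4_cube[OF assms] by (simp_all add: power3_eq_cube power2_eq_square mult.assoc)
  have "(smul c y = smul b x) = (y = smul (b*c^2) x)"
  proof
    assume "smul c y = smul b x"
    then have "smul (c^2) (smul c y) = smul (c^2) (smul b x)" by simp
    then show "y = smul (b*c^2) x" using c3 by (simp add: mult.commute)
  next
    assume "y = smul (b*c^2) x"
    then show "smul c y = smul b x" using c3 by (simp add: mult_ac)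
  qed
  then show ?thesis by (simp add: Sm_def)
qed
lemma Tm0[simp]: "Tm n 0 x y = 1" by (simp add: Tm_def)

lemma add_eq0: "((u::f4) + v = 0) = (u = v)"
  using f4_cases[of u] f4_cases[of v] by (auto simp: FA_FB)

lemma lin_eq0: assumes "(m::f4) \<noteq> 0" shows "(l*a + m^2*b = 0) = (b = l*m*a)"
proof -
  have m3: "m^3 = 1" using f4_cube[OF assms] .
  have 1: "m * (m^2 * b) = b" using m3 by (simp add: power3_eq_cube power2_eq_square mult.assoc[symmetric])
  have 2: "m^2 * (l*m*a) = l*a" using m3 by (simp add: power3_eq_cube power2_eq_square mult_ac)
  show ?thesis
  proof
    assume "l*a + m^2*b = 0"
    then have "l*a = m^2*b" by (simp add: add_eq0)
    then have "m*(l*a) = b" using 1 by simp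
    then show "b = l*m*a" by (simp add: mult_ac)
  next
    assume "b = l*m*a"
    then show "l*a + m^2*b = 0" using 2 by (simp add: add_eq0)
  qed
qed

lemma wzero: assumes "l \<noteq> 0" "m \<noteq> 0"
  shows "((\<lambda>k. l * x k + m^2 * y k) = zero_vec) = (y = smul (l*m) x)"
  using lin_eq0[OF assms(2)] by (simp add: fun_eq_iff zero_vec_def F0_is smul_def)

lemma wnz1: assumes "m \<noteq> 0" "y \<in> Phi n" shows "(\<lambda>k. 0 * x k + m^2 * y k) \<noteq> zero_vec"
proof
  obtain k where k: "y k \<noteq> 0" using Phi_nz[OF assms(2)] .
  assume "(\<lambda>k. 0 * x k + m^2 * y k) = zero_vec"
  then have "m^2 * y k = 0" by (metis add_0 mult_zero_left zero_vec_def F0_is)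
  then show False using k assms(1) by simp
qed

lemma wnz2: assumes "l \<noteq> 0" "x \<in> Phi n" shows "(\<lambda>k. l * x k + 0^2 * y k) \<noteq> zero_vec"
proof
  obtain k where k: "x k \<noteq> 0" using Phi_nz[OF assms(2)] .
  assume "(\<lambda>k. l * x k + 0^2 * y k) = zero_vec"
  then have "l * x k = 0" by (metis add_0_right mult_zero_left power_zero_numeral zero_vec_def F0_is)
  then show False using k assms(1) by simp
qed

definition qq :: "nat \<Rightarrow> complex" where "qq n = (-2)^n"

lemma four_pow: "(4::complex)^n = qq n * qq n"
  by (simp add: qq_def power_mult_distrib[symmetric])

lemma TT: assumes x: "x \<in> Phi n" and y: "y \<in> Phi n"
  shows "mmul n (Tm n l) (Tm n m) x y =
    (if l = 0 \<and> m = 0 then NN (qq n) else if l = 0 \<or> m = 0 then qq n / 2 - 1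
     else qq n * qq n / 2 * Sm (l*m) x y + qq n / 2 * Tm n (l*m) x y - 1)"
proof -
  have P: "mmul n (Tm n l) (Tm n m) x y =
    (if (\<lambda>k. l * x k + m^2 * y k) = zero_vec then qq n * qq n else 0) / 2 + qq n / 2 * psi (l * m * herm n x y) - 1"
    using P1[OF x y, of l m] by (simp add: four_pow qq_def)
  show ?thesis
  proof (cases "l = 0 \<and> m = 0")
    case True
    then have "(\<lambda>k. l * x k + m^2 * y k) = zero_vec" by (simp add: zero_vec_def F0_is)
    then show ?thesis using True P by (simp add: NN_def field_simps)
  next
    case False
    show ?thesis
    proof (cases "l = 0")
      case True
      then have m: "m \<noteq> 0" using False by simp
      show ?thesis using P wnz1[OF m y, of x] True m by simp
    next
      case l: False
      show ?thesis
      proof (cases "m = 0")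
        case True
        show ?thesis using P wnz2[OF l x, of y] True l by simp
      next
        case m: False
        show ?thesis using P l m by (simp add: wzero[OF l m] Sm_def Tm_def)
      qed
    qed
  qed
qed

definition bm :: "nat \<Rightarrow> f4 \<Rightarrow> nat \<Rightarrow> mat" where
  "bm n \<alpha> j = [Sm 1, Sm \<alpha>, Sm (\<alpha>^2), Tm n 0, Tm n 1, Tm n \<alpha>, Tm n (\<alpha>^2)] ! j"

lemma bm_prod:
  assumes a: "\<alpha> = FA \<or> \<alpha> = FB" and x: "x \<in> Phi n" and y: "y \<in> Phi n"
  shows "\<forall>j<7. \<forall>k<7. mmul n (bm n \<alpha> j) (bm n \<alpha> k) x y = (\<Sum>s<7. tab (qq n) j k s * bm n \<alpha> s x y)"
  apply (simp only: all7)
  apply (intro conjI)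
  apply (simp_all add: bm_def sum7 tab_def unitv_def mm_S_left[OF _ x] mm_S_right[OF _ y] TT[OF x y]
      alpha_facts[OF a] Tm_left Tm_right Sm_left Tm_right2 Sm_right2)
  done


definition interp :: "nat \<Rightarrow> f4 \<Rightarrow> (nat \<Rightarrow> complex) \<Rightarrow> mat" where
  "interp n \<alpha> c x y = (\<Sum>j<7. c j * bm n \<alpha> j x y)"

lemma mmul_interp:
  assumes a: "\<alpha> = FA \<or> \<alpha> = FB" and x: "x \<in> Phi n" and y: "y \<in> Phi n"
  shows "mmul n (interp n \<alpha> c) (interp n \<alpha> d) x y = interp n \<alpha> (cmul (qq n) c d) x y"
proof -
  have "mmul n (interp n \<alpha> c) (interp n \<alpha> d) x y
      = (\<Sum>z\<in>Phi n. \<Sum>j<7. \<Sum>k<7. c j * d k * (bm n \<alpha> j x z * bm n \<alpha> k z y))"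
    unfolding mmul_def interp_def by (simp add: sum_product mult_ac)
  also have "... = (\<Sum>j<7. \<Sum>k<7. c j * d k * mmul n (bm n \<alpha> j) (bm n \<alpha> k) x y)"
    unfolding mmul_def by (simp add: sum_distrib_left sum.swap[of _ "Phi n" "{..<7}"])
  also have "... = (\<Sum>j<7. \<Sum>k<7. \<Sum>s<7. c j * d k * tab (qq n) j k s * bm n \<alpha> s x y)"
    using bm_prod[OF a x y] by (intro sum.cong refl) (simp add: sum_distrib_left mult_ac)
  also have "... = (\<Sum>j<7. \<Sum>s<7. \<Sum>k<7. c j * d k * tab (qq n) j k s * bm n \<alpha> s x y)"
    by (rule sum.cong[OF refl], rule sum.swap)
  also have "... = (\<Sum>s<7. \<Sum>j<7. \<Sum>k<7. c j * d k * tab (qq n) j k s * bm n \<alpha> s x y)"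
    by (rule sum.swap)
  also have "... = interp n \<alpha> (cmul (qq n) c d) x y"
    unfolding interp_def cmul_def bmulv_def by (simp add: sum_distrib_left sum_distrib_right mult_ac)
  finally show ?thesis .
qed

definition ty :: "nat \<Rightarrow> f4 \<Rightarrow> (nat \<Rightarrow> f4) \<Rightarrow> (nat \<Rightarrow> f4) \<Rightarrow> nat" where
  "ty n \<alpha> x y = (if y = x then 0 else if y = smul \<alpha> x then 1 else if y = smul (\<alpha>^2) x then 2
     else if herm n x y = 1 then 3 else if herm n x y = \<alpha> then 4 else if herm n x y = \<alpha>^2 then 5 else 6)"

lemma ty_lt: "ty n \<alpha> x y < 7" by (simp add: ty_def)

lemma smul_zero: "smul 0 x = zero_vec" by (simp add: fun_eq_iff zero_vec_def F0_is)

lemma span_iff: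
  assumes a: "\<alpha> = FA \<or> \<alpha> = FB" and x: "x \<in> Phi n" and y: "y \<in> Phi n"
  shows "(y \<in> span1 x) = (y = x \<or> y = smul \<alpha> x \<or> y = smul (\<alpha>^2) x)"
proof
  assume "y \<in> span1 x"
  then obtain c where c: "y = smul c x" by (auto simp: span1_def)
  have "c \<noteq> 0" using c y by (auto simp: smul_zero Phi_iff)
  then show "y = x \<or> y = smul \<alpha> x \<or> y = smul (\<alpha>^2) x" using f4_alpha[OF a, of c] c by auto
next
  assume "y = x \<or> y = smul \<alpha> x \<or> y = smul (\<alpha>^2) x"
  then show "y \<in> span1 x" unfolding span1_def by (metis (mono_tags, lifting) mem_Collect_eq smul_one)
qed

lemma herm_self_smul: "x \<in> Phi n \<Longrightarrow> herm n x (smul c x) = 0"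
  by (simp add: herm_smul2 Phi_iff)

lemma adj_ty:
  assumes a: "\<alpha> = FA \<or> \<alpha> = FB" and x: "x \<in> Phi n" and y: "y \<in> Phi n"
  shows "\<forall>l<7. adj n \<alpha> l x y = (if l = ty n \<alpha> x y then 1 else 0)"
proof -
  have h: "herm n x y = 0 \<or> herm n x y = 1 \<or> herm n x y = \<alpha> \<or> herm n x y = \<alpha>^2" using f4_alpha[OF a] .
  show ?thesis
  apply (simp only: all7)
  apply (simp add: adj_def rel_def ty_def x y F0_is span_iff[OF a x y] smul_eq_self[OF x] smul_eq_iff[OF x]
      alpha_facts[OF a] herm_self_smul[OF x])
  using h alpha_facts[OF a] x by (auto simp: Phi_iff)
qed

lemma bm_ty:
  assumes a: "\<alpha> = FA \<or> \<alpha> = FB" and x: "x \<in> Phi n" and y: "y \<in> Phi n"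
  shows "\<forall>j<7. bm n \<alpha> j x y = bvt (ty n \<alpha> x y) j"
proof -
  have h: "herm n x y = 0 \<or> herm n x y = 1 \<or> herm n x y = \<alpha> \<or> herm n x y = \<alpha>^2" using f4_alpha[OF a] .
  show ?thesis
  apply (simp only: all7)
  apply (simp add: bm_def Sm_def Tm_def ty_def bvt_def smul_eq_self[OF x] smul_eq_iff[OF x]
      alpha_facts[OF a] herm_self_smul[OF x])
  using h alpha_facts[OF a] x by (auto simp: FA_FB Phi_iff)
qed


lemma omega_sq: "omega^2 = -1 - omega"
  by (simp add: omega_def complex_eq_iff power2_eq_square field_simps)

lemma omega_cnj: "cnj omega = -1 - omega"
  by (simp add: omega_def complex_eq_iff field_simps)

lemma qq_facts: assumes "n \<ge> 4"
  shows "qq n \<noteq> 0" "qq n \<noteq> -8" "qq n \<noteq> 1" "qq n \<noteq> 4" "qq n \<noteq> -2" "NN (qq n) \<noteq> 0"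
proof -
  have "norm (qq n) = 2^n" by (simp add: qq_def norm_power)
  moreover have "(2::real)^n \<ge> 2^4" using assms by (intro power_increasing) auto
  ultimately have nq: "norm (qq n) \<ge> 16" by simp
  show "qq n \<noteq> 0" using nq by auto
  show "qq n \<noteq> -8" proof assume "qq n = -8" with nq show False by simp qed
  show "qq n \<noteq> 1" proof assume "qq n = 1" with nq show False by simp qed
  show "qq n \<noteq> 4" proof assume "qq n = 4" with nq show False by simp qed
  show "qq n \<noteq> -2" proof assume "qq n = -2" with nq show False by simp qed
  have e: "NN (qq n) * 2 = (qq n + 2) * (qq n - 1)" by (simp add: NN_def field_simps)
  have "qq n + 2 \<noteq> 0" using \<open>qq n \<noteq> -2\<close> by (metis eq_neg_iff_add_eq_0)
  moreover have "qq n - 1 \<noteq> 0" using \<open>qq n \<noteq> 1\<close> by simp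
  ultimately have "(qq n + 2) * (qq n - 1) \<noteq> 0" by simp
  then show "NN (qq n) \<noteq> 0" using e by auto
qed

lemma pow_facts: assumes "n \<ge> 4"
  shows "(-2::complex)^(n-1) = - qq n / 2" "(-2::complex)^(n-2) = qq n / 4" "(-2::complex)^(n-3) = - qq n / 8"
    "(2::complex)^(2*n-3) = qq n * qq n / 8"
proof -
  define m where "m = n - 3"
  have m: "n = m + 3" using assms by (simp add: m_def)
  have e1: "n - 1 = m + 2" "n - 2 = m + 1" "n - 3 = m" "2*n - 3 = 2*m + 3" using m by auto
  define p where "p = (-2::complex)^m"
  have q8: "qq n = -8 * p" by (simp add: qq_def m power_add p_def)
  have p1: "(-2::complex)^(n-1) = 4 * p" unfolding e1 by (simp add: power_add p_def)
  have p2: "(-2::complex)^(n-2) = -2 * p" unfolding e1 by (simp add: power_add p_def)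
  have p3: "(-2::complex)^(n-3) = p" unfolding e1 by (simp add: p_def)
  have pp: "p * p = (4::complex)^m" by (simp add: p_def power_mult_distrib[symmetric])
  have t: "(2::complex)^(2*n-3) = 8 * 4^m" unfolding e1 by (simp add: power_add power_mult)
  show "(-2::complex)^(n-1) = - qq n / 2" unfolding p1 q8 by simp
  show "(-2::complex)^(n-2) = qq n / 4" unfolding p2 q8 by simp
  show "(-2::complex)^(n-3) = - qq n / 8" unfolding p3 q8 by simp
  show "(2::complex)^(2*n-3) = qq n * qq n / 8" unfolding t q8 by (simp add: pp[symmetric])
qed

lemma CT: assumes "n \<ge> 4"
  shows "\<forall>i<7. \<forall>j<7. char_table n i j = pa (qq n) i j + pb (qq n) i j * omega"
  apply (simp only: all7)
  apply (unfold char_table_def Let_def pow_facts[OF assms])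
  apply (simp add: omega_cnj pa_def pb_def)
  apply ((simp add: field_simps)?)
  done

lemma sum_ind7: "(t::nat) < 7 \<Longrightarrow> (\<Sum>l<7. c l * (if l = t then 1 else 0)) = (c t :: complex)"
proof -
  assume t: "t < 7"
  have "(\<Sum>l<7. c l * (if l = t then 1 else 0)) = (\<Sum>l<7. if l = t then c l else 0)"
    by (rule sum.cong) auto
  then show ?thesis using t by (simp add: sum.delta)
qed

lemma herm_sum_drop: "(\<forall>k\<ge>2. g k = 0) \<Longrightarrow> 2 \<le> n \<Longrightarrow> (\<Sum>k<n. g k) = (\<Sum>k<(2::nat). (g k :: f4))"
  by (rule sum.mono_neutral_right) auto

theorem theorem5p1:
  fixes n :: nat and \<alpha> :: f4
  assumes "n \<ge> 4" and "f4_primitive \<alpha>"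
  shows "\<exists>E :: nat \<Rightarrow> mat.
           primitive_idempotents n \<alpha> E \<and>
           (\<forall>x\<in>Phi n. \<forall>y\<in>Phi n. E 0 x y = 1 / of_nat (card (Phi n))) \<and>
           (\<forall>j<7. \<forall>x\<in>Phi n. \<forall>y\<in>Phi n.
               adj n \<alpha> j x y = (\<Sum>i<7. char_table n i j * E i x y))"
proof -
  have a: "\<alpha> = FA \<or> \<alpha> = FB" using prim_cases[OF assms(2)] .
  define q where "q = qq n"
  have q: "q \<noteq> 0" and N: "NN q \<noteq> 0" using qq_facts[OF assms(1)] by (simp_all add: q_def)
  have w: "omega^2 = -1 - omega" by (rule omega_sq)
  define E where "E i = interp n \<alpha> (evec q omega i)" for i
  have EV: "E i x y = valA q i (ty n \<alpha> x y) + valB q i (ty n \<alpha> x y) * omega"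
    if x: "x \<in> Phi n" and y: "y \<in> Phi n" for i x y
  proof -
    have "E i x y = (\<Sum>s<7. (ea q i s + eb q i s * omega) * bvt (ty n \<alpha> x y) s)"
      unfolding E_def interp_def evec_def using bm_ty[OF a x y] by (intro sum.cong refl) simp
    also have "... = valA q i (ty n \<alpha> x y) + valB q i (ty n \<alpha> x y) * omega"
      unfolding valA_def valB_def by (rule sumsplit)
    finally show ?thesis .
  qed
  have BM: "in_bose_mesner n \<alpha> (E i)" for i
    unfolding in_bose_mesner_def
  proof (intro exI ballI)
    fix x y assume x: "x \<in> Phi n" and y: "y \<in> Phi n"
    have "(\<Sum>j<7. (valA q i j + valB q i j * omega) * adj n \<alpha> j x y)
        = (\<Sum>j<7. (valA q i j + valB q i j * omega) * (if j = ty n \<alpha> x y then 1 else 0))"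
      using adj_ty[OF a x y] by (intro sum.cong refl) simp
    also have "... = valA q i (ty n \<alpha> x y) + valB q i (ty n \<alpha> x y) * omega"
      using sum_ind7[OF ty_lt] by simp
    finally show "E i x y = (\<Sum>j<7. (valA q i j + valB q i j * omega) * adj n \<alpha> j x y)"
      using EV[OF x y] by simp
  qed
  define x0 :: "nat \<Rightarrow> f4" where "x0 = (\<lambda>k. if k < 2 then 1 else 0)"
  have x0: "x0 \<in> Phi n"
  proof -
    have "x0 \<in> f4vecs n" using assms(1) by (auto simp: x0_def f4vecs_def F0_is)
    moreover have "x0 \<noteq> zero_vec"
    proof
      assume "x0 = zero_vec"
      then have "x0 0 = zero_vec 0" by simp
      then show False by (simp add: x0_def zero_vec_def F0_is)
    qed
    moreover have "herm n x0 x0 = 0"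
    proof -
      have "herm n x0 x0 = (\<Sum>k<n. x0 k * (x0 k)^2)" by (simp add: herm_eq)
      also have "... = (\<Sum>k<2. x0 k * (x0 k)^2)"
        using assms(1) by (intro herm_sum_drop) (auto simp: x0_def)
      also have "... = 0" by (simp add: x0_def eval_nat_numeral)
      finally show ?thesis .
    qed
    ultimately show ?thesis by (simp add: Phi_iff)
  qed
  have ty0: "ty n \<alpha> x0 x0 = 0" by (simp add: ty_def)
  have NZ: "E i x0 x0 \<noteq> 0" if i: "i < 7" for i
  proof -
    have v: "\<forall>i<7. valB q i 0 = 0 \<and> valA q i 0 = [1/NN q, 1/9, 1/9, (q+8)*(q-1)/(18*NN q), 2/9, 2/9, (q-4)*(q+2)/(9*NN q)] ! i"
      by (rule val0[OF q N])
    have qs: "q + 8 \<noteq> 0" "q - 1 \<noteq> 0" "q - 4 \<noteq> 0" "q + 2 \<noteq> 0"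
      using qq_facts[OF assms(1)] unfolding q_def by (metis eq_neg_iff_add_eq_0 right_minus_eq)+
    have ic: "i = 0 \<or> i = 1 \<or> i = 2 \<or> i = 3 \<or> i = 4 \<or> i = 5 \<or> i = 6" using i by arith
    have "valA q i 0 \<noteq> 0" using v ic N qs by auto
    then show ?thesis using EV[OF x0 x0] ty0 v i by simp
  qed
  have ORTH: "mmul n (E i) (E j) x y = (if i = j then E i x y else 0)"
    if x: "x \<in> Phi n" and y: "y \<in> Phi n" and i: "i < 7" and j: "j < 7" for i j x y
  proof -
    have "mmul n (E i) (E j) x y = interp n \<alpha> (cmul q (evec q omega i) (evec q omega j)) x y"
      unfolding E_def q_def by (rule mmul_interp[OF a x y])
    also have "... = (\<Sum>s<7. (if i = j then evec q omega i s else 0) * bm n \<alpha> s x y)"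
      unfolding interp_def by (intro sum.cong refl) (simp add: cmul_evec[OF w q N i j])
    also have "... = (if i = j then E i x y else 0)"
      by (simp add: E_def interp_def)
    finally show ?thesis .
  qed
  have SUM: "(\<Sum>i<7. E i x y) = (if x = y then 1 else 0)" if x: "x \<in> Phi n" and y: "y \<in> Phi n" for x y
  proof -
    have "(\<Sum>i<7. E i x y) = (\<Sum>i<7. \<Sum>s<7. evec q omega i s * bm n \<alpha> s x y)"
      by (simp add: E_def interp_def)
    also have "... = (\<Sum>s<7. \<Sum>i<7. evec q omega i s * bm n \<alpha> s x y)" by (rule sum.swap)
    also have "... = (\<Sum>s<7. unitv 0 s * bm n \<alpha> s x y)"
      by (intro sum.cong refl) (simp add: sum_distrib_right[symmetric] sum_evec[OF q N])
    also have "... = bm n \<alpha> 0 x y" by (simp add: sum7 unitv_def)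
    also have "... = (if x = y then 1 else 0)" by (auto simp: bm_def Sm_def)
    finally show ?thesis .
  qed
  have PI: "primitive_idempotents n \<alpha> E"
    unfolding primitive_idempotents_def
  proof (intro conjI allI impI ballI)
    fix i :: nat assume "i < 7" show "in_bose_mesner n \<alpha> (E i)" by (rule BM)
  next
    fix i :: nat assume i: "i < 7" show "\<exists>x\<in>Phi n. \<exists>y\<in>Phi n. E i x y \<noteq> 0" using x0 NZ[OF i] by blast
  next
    fix i j :: nat and x y assume "i < 7" "j < 7" "x \<in> Phi n" "y \<in> Phi n"
    then show "mmul n (E i) (E j) x y = (if i = j then E i x y else 0)" by (intro ORTH)
  next
    fix x y assume "x \<in> Phi n" "y \<in> Phi n"
    then show "(\<Sum>i<7. E i x y) = (if x = y then 1 else 0)" by (intro SUM)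
  qed
  have cardN: "of_nat (card (Phi n)) = NN q"
  proof -
    have "(of_nat (card (Phi n)) :: complex) = (\<Sum>z\<in>Phi n. psi (herm n z zero_vec))" by simp
    also have "... = NN q"
      using Msum[OF zero_vec_in[of n]] by (simp add: four_pow q_def NN_def qq_def)
    finally show ?thesis .
  qed
  have E0: "E 0 x y = 1 / of_nat (card (Phi n))" for x y
    by (simp add: cardN E_def interp_def sum7 evec_def ea_def eb_def bm_def)
  have TAB: "adj n \<alpha> j x y = (\<Sum>i<7. char_table n i j * E i x y)"
    if j: "j < 7" and x: "x \<in> Phi n" and y: "y \<in> Phi n" for j x y
  proof -
    define t where "t = ty n \<alpha> x y"
    have t: "t < 7" by (simp add: t_def ty_lt)
    have "(\<Sum>i<7. char_table n i j * E i x y)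
        = (\<Sum>i<7. (pa q i j + pb q i j * omega) * (valA q i t + valB q i t * omega))"
      using CT[OF assms(1)] j by (intro sum.cong refl) (simp add: EV[OF x y] t_def q_def)
    also have "... = (\<Sum>i<7. (pa q i j * valA q i t - pb q i j * valB q i t)
        + (pa q i j * valB q i t + pb q i j * valA q i t - pb q i j * valB q i t) * omega)"
      by (simp only: pairmul[OF w])
    also have "... = (\<Sum>i<7. pa q i j * valA q i t - pb q i j * valB q i t)
        + (\<Sum>i<7. pa q i j * valB q i t + pb q i j * valA q i t - pb q i j * valB q i t) * omega"
      by (simp only: sum.distrib sum_distrib_right)
    also have "... = (if j = t then 1 else 0)"
      using tableA[OF q N] tableB[OF q N] j t by simp
    also have "... = adj n \<alpha> j x y" using adj_ty[OF a x y] j by (simp add: t_def)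
    finally show ?thesis by simp
  qed
  show ?thesis
  proof (intro exI[of _ E] conjI)
    show "primitive_idempotents n \<alpha> E" by (rule PI)
    show "\<forall>x\<in>Phi n. \<forall>y\<in>Phi n. E 0 x y = 1 / of_nat (card (Phi n))" using E0 by blast
    show "\<forall>j<7. \<forall>x\<in>Phi n. \<forall>y\<in>Phi n. adj n \<alpha> j x y = (\<Sum>i<7. char_table n i j * E i x y)"
      using TAB by blast
  qed
qed


end
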